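(* Let $n,k,j,i$ be integers with $n\ge k\ge 1$, $0\le j<n$, $i\ge 1$. Let $f^*_{(n,k)\setminus(j),i}(q)$ be the sum of $q^{\mathrm{maj}(\tau)}$ over standard Young tableaux $\tau$ of skew shape $(n,k)\setminus(j)$ with exactly $i$ descents in which the entry $1$ lies in the top row. Then $$f^*_{(n,k)\setminus(j),i}(q) = q^{i^2}\left( \begin{bmatrix} n-j \\ i \end{bmatrix}_q \begin{bmatrix} k-1 \\ i-1 \end{bmatrix}_q - \begin{bmatrix} n \\ i-1 \end{bmatrix}_q \begin{bmatrix} k-j-1 \\ i \end{bmatrix}_q \right).$$
   Context: The skew shape $(n,k)\setminus(j)$ consists of a top row occupying columns $j+1,\dots,n$ and a bottom row occupying columns $1,\dots,k$. A standard Young tableau of this shape is a filling with $1,\dots,n+k-j$, each used once, increasing along rows left to right and down columns. It has a descent at $m$ if $m+1$ lies in a strictly lower row than $m$; $\mathrm{maj}$ is the sum of the descents. The $q$-binomial coefficient is $\begin{bmatrix} M \\ N \end{bmatrix}_q = \frac{(q)_M}{(q)_N(q)_{M-N}}$ with $(q)_m=(1-q)\cdots(1-q^m)$ when $0\le N\le M$ are integers, and $0$ otherwise. *)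

theory Defs
  imports "HOL-Computational_Algebra.Polynomial" "HOL-Computational_Algebra.Fraction_Field"
begin

text \<open>Cells of the skew shape (n,k) minus (j): row 0 is the top row (columns j+1..n),
  row 1 is the bottom row (columns 1..k). A cell is a pair (row, column).\<close>
definition skew_cells :: "nat \<Rightarrow> nat \<Rightarrow> nat \<Rightarrow> (nat \<times> nat) set" where
  "skew_cells n k j = {(0, c) | c. j < c \<and> c \<le> n} \<union> {(1, c) | c. 1 \<le> c \<and> c \<le> k}"

definition skew_syt :: "nat \<Rightarrow> nat \<Rightarrow> nat \<Rightarrow> ((nat \<times> nat) \<Rightarrow> nat) set" where
  "skew_syt n k j = {T.
     bij_betw T (skew_cells n k j) {1..n + k - j} \<and>
     (\<forall>x. x \<notin> skew_cells n k j \<longrightarrow> T x = 0) \<and>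
     (\<forall>r c c'. (r, c) \<in> skew_cells n k j \<and> (r, c') \<in> skew_cells n k j \<and> c < c'
                \<longrightarrow> T (r, c) < T (r, c')) \<and>
     (\<forall>c. (0, c) \<in> skew_cells n k j \<and> (1, c) \<in> skew_cells n k j \<longrightarrow> T (0, c) < T (1, c))}"

definition entry_row :: "nat \<Rightarrow> nat \<Rightarrow> nat \<Rightarrow> ((nat \<times> nat) \<Rightarrow> nat) \<Rightarrow> nat \<Rightarrow> nat" where
  "entry_row n k j T m = fst (THE x. x \<in> skew_cells n k j \<and> T x = m)"

definition descents :: "nat \<Rightarrow> nat \<Rightarrow> nat \<Rightarrow> ((nat \<times> nat) \<Rightarrow> nat) \<Rightarrow> nat set" where
  "descents n k j T = {m. 1 \<le> m \<and> m < n + k - j \<and>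
      entry_row n k j T m < entry_row n k j T (m + 1)}"

definition maj :: "nat \<Rightarrow> nat \<Rightarrow> nat \<Rightarrow> ((nat \<times> nat) \<Rightarrow> nat) \<Rightarrow> nat" where
  "maj n k j T = \<Sum>(descents n k j T)"

definition fstar :: "nat \<Rightarrow> nat \<Rightarrow> nat \<Rightarrow> nat \<Rightarrow> int poly" where
  "fstar n k j i = (\<Sum>T \<in> {T \<in> skew_syt n k j. card (descents n k j T) = i \<and> entry_row n k j T 1 = 0}.
       monom 1 (maj n k j T))"

definition rf :: "int poly \<Rightarrow> int poly fract" where
  "rf p = Fract p 1"

definition qpoch :: "nat \<Rightarrow> int poly" where
  "qpoch m = (\<Prod>i = 1..m. 1 - monom 1 i)"

definition qbinom :: "int \<Rightarrow> int \<Rightarrow> int poly fract" where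
  "qbinom M N = (if 0 \<le> N \<and> N \<le> M
     then rf (qpoch (nat M)) / (rf (qpoch (nat N)) * rf (qpoch (nat (M - N)))) else 0)"

end

theory Submission
  imports Defs
begin


fun Gn :: "nat \<Rightarrow> nat \<Rightarrow> int poly" where
  "Gn 0 0 = 1"
| "Gn 0 (Suc k) = 0"
| "Gn (Suc m) 0 = 1"
| "Gn (Suc m) (Suc k) = Gn m k + monom 1 (Suc k) * Gn m (Suc k)"

lemma Gn_zero: "m < k \<Longrightarrow> Gn m k = 0"
proof (induction m arbitrary: k)
  case 0 then show ?case by (cases k) auto
next
  case (Suc m) then show ?case by (cases k) auto
qed

lemma Gn_0 [simp]: "Gn m 0 = 1" by (cases m) auto

definition G :: "int \<Rightarrow> int \<Rightarrow> int poly" where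
  "G M N = (if 0 \<le> M \<and> 0 \<le> N then Gn (nat M) (nat N) else 0)"

lemma G_pascal:
  assumes "M \<noteq> 0 \<or> N \<noteq> 0"
  shows "G M N = G (M - 1) (N - 1) + monom 1 (nat N) * G (M - 1) N"
proof (cases "M \<ge> 1 \<and> N \<ge> 0")
  case True
  define m where "m = nat (M - 1)"
  have m: "M = int (Suc m)" using True by (simp add: m_def)
  then have mm: "nat M = Suc m" "M - 1 = int m" "M \<ge> 0" by auto
  from True obtain l where l: "N = int l" using nonneg_eq_int by blast
  show ?thesis
  proof (cases l)
    case 0 then show ?thesis using mm l by (simp add: G_def)
  next
    case (Suc l')
    then have "nat N = Suc l'" "N - 1 = int l'" "N \<ge> 0" using l by auto
    then show ?thesis using mm by (simp add: G_def)
  qed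
next
  case False
  then have "M \<le> 0 \<or> N < 0" by auto
  then show ?thesis
  proof (cases "N < 0")
    case True then show ?thesis by (simp add: G_def)
  next
    case False
    with \<open>M \<le> 0 \<or> N < 0\<close> have M0: "M \<le> 0" "\<not> N < 0" by auto
    then obtain l where l: "N = int l" using nonneg_eq_int by (metis not_less)
    show ?thesis
    proof (cases "M = 0")
      case True
      with assms l obtain l' where "l = Suc l'" by (metis not0_implies_Suc of_nat_0)
      then have "nat N > 0" using l by auto
      then show ?thesis using True by (simp add: G_def Gn_zero)
    next
      case False then show ?thesis using M0 by (simp add: G_def)
    qed
  qed
qed

definition Pc :: "nat \<Rightarrow> nat \<Rightarrow> nat \<Rightarrow> nat \<Rightarrow> int poly" where
  "Pc a b d i = monom 1 (i^2) * (G (int a) (int i) * G (int b - 1) (int i - 1)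
      - G (int a + int d) (int i - 1) * G (int b - int d - 1) (int i))"

definition Qc :: "nat \<Rightarrow> nat \<Rightarrow> nat \<Rightarrow> nat \<Rightarrow> int poly" where
  "Qc a b d i = monom 1 (i^2 + i) * (G (int a) (int i) * G (int b - 1) (int i)
      - G (int a + int d) (int i) * G (int b - int d - 1) (int i))"

lemma qpoch_Suc: "qpoch (Suc m) = qpoch m * (1 - monom 1 (Suc m))"
  by (simp add: qpoch_def prod.cl_ivl_Suc)

lemma qpoch_0 [simp]: "qpoch 0 = 1"
  by (simp add: qpoch_def)

lemma qpoch_nz: "qpoch m \<noteq> 0"
proof (induction m)
  case 0 then show ?case by simp
next
  case (Suc m)
  have "coeff (1 - monom (1::int) (Suc m)) 0 = 1" by (simp add: coeff_monom)
  then have "1 - monom (1::int) (Suc m) \<noteq> 0" by (metis coeff_0 zero_neq_one)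
  then show ?case using Suc by (simp add: qpoch_Suc)
qed

lemma monom_mult1: "monom (1::int) a * monom 1 b = monom 1 (a + b)"
  by (simp add: mult_monom)

lemma Gn_qpoch: "k \<le> m \<Longrightarrow> Gn m k * qpoch k * qpoch (m - k) = qpoch m"
proof (induction m arbitrary: k)
  case 0 then show ?case by simp
next
  case (Suc m)
  show ?case
  proof (cases k)
    case 0 then show ?thesis by simp
  next
    case (Suc l)
    with Suc.prems have lm: "l \<le> m" by simp
    have IH1: "Gn m l * qpoch l * qpoch (m - l) = qpoch m" using Suc.IH lm by simp
    have T2: "monom 1 (Suc l) * Gn m (Suc l) * qpoch (Suc l) * qpoch (m - l)
        = qpoch m * (monom 1 (Suc l) - monom 1 (Suc m))"
    proof (cases "l = m")
      case True then show ?thesis by (simp add: Gn_zero)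
    next
      case False
      then have "Suc l \<le> m" using lm by simp
      then have IH2: "Gn m (Suc l) * qpoch (Suc l) * qpoch (m - Suc l) = qpoch m" using Suc.IH by blast
      have e: "m - l = Suc (m - Suc l)" using \<open>Suc l \<le> m\<close> by simp
      have "monom 1 (Suc l) * Gn m (Suc l) * qpoch (Suc l) * qpoch (m - l)
         = (Gn m (Suc l) * qpoch (Suc l) * qpoch (m - Suc l)) * (monom 1 (Suc l) * (1 - monom 1 (Suc (m - Suc l))))"
        unfolding e qpoch_Suc by (simp add: algebra_simps)
      also have "monom 1 (Suc l) * (1 - monom 1 (Suc (m - Suc l))) = monom (1::int) (Suc l) - monom 1 (Suc m)"
        using \<open>Suc l \<le> m\<close> by (simp add: right_diff_distrib monom_mult1)
      finally show ?thesis using IH2 by simp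
    qed
    have "Gn (Suc m) k * qpoch k * qpoch (Suc m - k)
        = Gn m l * qpoch l * qpoch (m - l) * (1 - monom 1 (Suc l))
          + monom 1 (Suc l) * Gn m (Suc l) * qpoch (Suc l) * qpoch (m - l)"
      using Suc by (simp add: qpoch_Suc algebra_simps)
    also have "\<dots> = qpoch m * (1 - monom 1 (Suc m))"
      using IH1 T2 by (simp add: algebra_simps)
    finally show ?thesis by (simp add: qpoch_Suc)
  qed
qed

lemma rf_mult: "rf (p * q) = rf p * rf q" by (simp add: rf_def)
lemma rf_add: "rf (p + q) = rf p + rf q" by (simp add: rf_def)
lemma rf_diff: "rf (p - q) = rf p - rf q" by (simp add: rf_def)
lemma rf_0: "rf 0 = 0" by (simp add: rf_def Zero_fract_def)
lemma rf_nz: "p \<noteq> 0 \<Longrightarrow> rf p \<noteq> 0" by (simp add: rf_def Zero_fract_def eq_fract)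

lemma qbinom_G: "qbinom M N = rf (G M N)"
proof (cases "0 \<le> N \<and> N \<le> M")
  case True
  then have le: "nat N \<le> nat M" by (intro nat_mono) simp
  have "nat (M - N) = nat M - nat N" using True by (simp add: nat_diff_distrib)
  then have "rf (qpoch (nat M)) = rf (G M N) * (rf (qpoch (nat N)) * rf (qpoch (nat (M - N))))"
    using Gn_qpoch[OF le] True by (simp add: G_def rf_mult[symmetric] mult.assoc)
  moreover have "rf (qpoch (nat N)) * rf (qpoch (nat (M - N))) \<noteq> 0"
    using rf_nz qpoch_nz by simp
  ultimately show ?thesis using True by (simp add: qbinom_def)
next
  case False
  then show ?thesis by (auto simp: qbinom_def G_def rf_0 Gn_zero)
qed



fun dc :: "nat list \<Rightarrow> nat" where
  "dc (x # y # r) = (if x = 0 \<and> y = 1 then 1 else 0) + dc (y # r)"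
| "dc _ = 0"

fun mj :: "nat list \<Rightarrow> nat" where
  "mj (x # y # r) = (if x = 0 \<and> y = 1 then 1 else 0) + dc (y # r) + mj (y # r)"
| "mj _ = 0"

fun bal :: "nat \<Rightarrow> nat list \<Rightarrow> bool" where
  "bal d [] = True"
| "bal d (x # u) = (if x = 0 then bal (Suc d) u else if x = 1 then (0 < d \<and> bal (d - 1) u) else bal d u)"

definition Wd :: "nat \<Rightarrow> nat \<Rightarrow> nat \<Rightarrow> nat list set" where
  "Wd a b d = {w. set w \<subseteq> {0,1} \<and> count_list w 0 = a \<and> count_list w 1 = b \<and> bal d w}"

lemma len_count: "set (w::nat list) \<subseteq> {0,1} \<Longrightarrow> length w = count_list w 0 + count_list w 1"
  using sum_count_set[of w "{0::nat,1}"] by simp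

lemma finite_Wd: "finite (Wd a b d)"
proof -
  have "Wd a b d \<subseteq> {w. set w \<subseteq> {0,1} \<and> length w = a + b}"
    unfolding Wd_def using len_count by fastforce
  moreover have "finite {w. set w \<subseteq> {0::nat,1} \<and> length w = a + b}"
    by (rule finite_lists_length_eq) simp
  ultimately show ?thesis by (rule finite_subset)
qed

definition S :: "nat \<Rightarrow> nat \<Rightarrow> nat \<Rightarrow> nat \<Rightarrow> nat \<Rightarrow> int poly" where
  "S a b d i x = (\<Sum>w \<in> {w \<in> Wd a b d. w \<noteq> [] \<and> hd w = x \<and> dc w = i}. monom 1 (mj w))"

lemma dc_cons: "u \<noteq> [] \<Longrightarrow> dc (x # u) = (if x = 0 \<and> hd u = 1 then 1 else 0) + dc u"
  by (cases u) auto

lemma mj_cons: "u \<noteq> [] \<Longrightarrow> mj (x # u) = (if x = 0 \<and> hd u = 1 then 1 else 0) + dc u + mj u"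
  by (cases u) auto

lemma split3:
  fixes F :: "nat list \<Rightarrow> int poly"
  assumes "finite U" "\<And>u. u \<in> U \<Longrightarrow> set u \<subseteq> {0,1}"
  shows "sum F U = sum F {u \<in> U. u = []} + sum F {u \<in> U. u \<noteq> [] \<and> hd u = 0}
      + sum F {u \<in> U. u \<noteq> [] \<and> hd u = 1}"
proof -
  have "U = {u \<in> U. u = []} \<union> {u \<in> U. u \<noteq> [] \<and> hd u = 0} \<union> {u \<in> U. u \<noteq> [] \<and> hd u = 1}"
  proof (intro equalityI subsetI)
    fix u assume "u \<in> U"
    then show "u \<in> {u \<in> U. u = []} \<union> {u \<in> U. u \<noteq> [] \<and> hd u = 0} \<union> {u \<in> U. u \<noteq> [] \<and> hd u = 1}"
      using assms(2)[of u] by (cases u) auto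
  qed auto
  then have "sum F U = sum F ({u \<in> U. u = []} \<union> {u \<in> U. u \<noteq> [] \<and> hd u = 0} \<union> {u \<in> U. u \<noteq> [] \<and> hd u = 1})"
    by simp
  also have "\<dots> = sum F ({u \<in> U. u = []} \<union> {u \<in> U. u \<noteq> [] \<and> hd u = 0}) + sum F {u \<in> U. u \<noteq> [] \<and> hd u = 1}"
    by (rule sum.union_disjoint) (use assms(1) in auto)
  also have "sum F ({u \<in> U. u = []} \<union> {u \<in> U. u \<noteq> [] \<and> hd u = 0}) = sum F {u \<in> U. u = []} + sum F {u \<in> U. u \<noteq> [] \<and> hd u = 0}"
    by (rule sum.union_disjoint) (use assms(1) in auto)
  finally show ?thesis .
qed

lemma Wd_cons0: "(0 # u \<in> Wd (Suc a) b d) = (u \<in> Wd a b (Suc d))"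
  by (auto simp: Wd_def)

lemma Wd_cons1: "(1 # u \<in> Wd a (Suc b) (Suc d)) = (u \<in> Wd a b d)"
  by (auto simp: Wd_def)

lemma S_reindex:
  "S a b d i x = (\<Sum>u \<in> {u. x # u \<in> Wd a b d \<and> dc (x # u) = i}. monom 1 (mj (x # u)))"
proof -
  have "{w \<in> Wd a b d. w \<noteq> [] \<and> hd w = x \<and> dc w = i} = Cons x ` {u. x # u \<in> Wd a b d \<and> dc (x # u) = i}"
  proof (intro equalityI subsetI)
    fix w assume "w \<in> {w \<in> Wd a b d. w \<noteq> [] \<and> hd w = x \<and> dc w = i}"
    then show "w \<in> Cons x ` {u. x # u \<in> Wd a b d \<and> dc (x # u) = i}"
      by (cases w) auto
  qed auto
  then show ?thesis unfolding S_def by (simp add: sum.reindex)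
qed

lemma P_rec:
  "S (Suc a) b d i 0 = (if a = 0 \<and> b = 0 \<and> i = 0 then 1 else 0) + monom 1 i * S a b (Suc d) i 0
     + (if i = 0 then 0 else monom 1 i * S a b (Suc d) (i - 1) 1)"
proof -
  let ?U = "{u. u \<in> Wd a b (Suc d) \<and> dc (0 # u) = i}"
  let ?F = "\<lambda>u. monom (1::int) (mj (0 # u))"
  have "S (Suc a) b d i 0 = sum ?F ?U" unfolding S_reindex Wd_cons0 by simp
  also have "\<dots> = sum ?F {u \<in> ?U. u = []} + sum ?F {u \<in> ?U. u \<noteq> [] \<and> hd u = 0}
      + sum ?F {u \<in> ?U. u \<noteq> [] \<and> hd u = 1}"
    by (rule split3) (auto intro: finite_subset[OF _ finite_Wd[of a b "Suc d"]] simp: Wd_def)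
  also have "sum ?F {u \<in> ?U. u = []} = (if a = 0 \<and> b = 0 \<and> i = 0 then 1 else 0)"
  proof -
    have "{u \<in> ?U. u = []} = (if a = 0 \<and> b = 0 \<and> i = 0 then {[]} else {})"
      by (auto simp: Wd_def)
    then show ?thesis by simp
  qed
  also have "sum ?F {u \<in> ?U. u \<noteq> [] \<and> hd u = 0} = monom 1 i * S a b (Suc d) i 0"
  proof -
    have "{u \<in> ?U. u \<noteq> [] \<and> hd u = 0} = {w \<in> Wd a b (Suc d). w \<noteq> [] \<and> hd w = 0 \<and> dc w = i}"
      by (auto simp: dc_cons)
    moreover have "\<And>w. w \<in> {w \<in> Wd a b (Suc d). w \<noteq> [] \<and> hd w = 0 \<and> dc w = i} \<Longrightarrow>
        ?F w = monom 1 i * monom 1 (mj w)"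
      by (auto simp: mj_cons monom_mult1)
    ultimately show ?thesis unfolding S_def by (simp add: sum_distrib_left)
  qed
  also have "sum ?F {u \<in> ?U. u \<noteq> [] \<and> hd u = 1} = (if i = 0 then 0 else monom 1 i * S a b (Suc d) (i - 1) 1)"
  proof (cases i)
    case 0
    then have e: "{u \<in> ?U. u \<noteq> [] \<and> hd u = 1} = {}" by (auto simp: dc_cons)
    show ?thesis unfolding e using 0 by simp
  next
    case (Suc i')
    have "{u \<in> ?U. u \<noteq> [] \<and> hd u = 1} = {w \<in> Wd a b (Suc d). w \<noteq> [] \<and> hd w = 1 \<and> dc w = i'}"
      using Suc by (auto simp: dc_cons)
    moreover have "\<And>w. w \<in> {w \<in> Wd a b (Suc d). w \<noteq> [] \<and> hd w = 1 \<and> dc w = i'} \<Longrightarrow>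
        ?F w = monom 1 i * monom 1 (mj w)"
      using Suc by (auto simp: mj_cons monom_mult1)
    ultimately show ?thesis unfolding S_def using Suc by (simp add: sum_distrib_left)
  qed
  finally show ?thesis .
qed

lemma Q_rec:
  "S a (Suc b) (Suc d) i 1 = (if a = 0 \<and> b = 0 \<and> i = 0 then 1 else 0) + monom 1 i * S a b d i 0
     + monom 1 i * S a b d i 1"
proof -
  let ?U = "{u. u \<in> Wd a b d \<and> dc (1 # u) = i}"
  let ?F = "\<lambda>u. monom (1::int) (mj (1 # u))"
  have "S a (Suc b) (Suc d) i 1 = sum ?F ?U" unfolding S_reindex Wd_cons1 by simp
  also have "\<dots> = sum ?F {u \<in> ?U. u = []} + sum ?F {u \<in> ?U. u \<noteq> [] \<and> hd u = 0}
      + sum ?F {u \<in> ?U. u \<noteq> [] \<and> hd u = 1}"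
    by (rule split3) (auto intro: finite_subset[OF _ finite_Wd[of a b d]] simp: Wd_def)
  also have "sum ?F {u \<in> ?U. u = []} = (if a = 0 \<and> b = 0 \<and> i = 0 then 1 else 0)"
  proof -
    have "{u \<in> ?U. u = []} = (if a = 0 \<and> b = 0 \<and> i = 0 then {[]} else {})"
      by (auto simp: Wd_def)
    then show ?thesis by simp
  qed
  also have "sum ?F {u \<in> ?U. u \<noteq> [] \<and> hd u = 0} = monom 1 i * S a b d i 0"
  proof -
    have "{u \<in> ?U. u \<noteq> [] \<and> hd u = 0} = {w \<in> Wd a b d. w \<noteq> [] \<and> hd w = 0 \<and> dc w = i}"
      by (auto simp: dc_cons)
    moreover have "\<And>w. w \<in> {w \<in> Wd a b d. w \<noteq> [] \<and> hd w = 0 \<and> dc w = i} \<Longrightarrow>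
        ?F w = monom 1 i * monom 1 (mj w)"
      by (auto simp: mj_cons monom_mult1)
    ultimately show ?thesis unfolding S_def by (simp add: sum_distrib_left)
  qed
  also have "sum ?F {u \<in> ?U. u \<noteq> [] \<and> hd u = 1} = monom 1 i * S a b d i 1"
  proof -
    have "{u \<in> ?U. u \<noteq> [] \<and> hd u = 1} = {w \<in> Wd a b d. w \<noteq> [] \<and> hd w = 1 \<and> dc w = i}"
      by (auto simp: dc_cons)
    moreover have "\<And>w. w \<in> {w \<in> Wd a b d. w \<noteq> [] \<and> hd w = 1 \<and> dc w = i} \<Longrightarrow>
        ?F w = monom 1 i * monom 1 (mj w)"
      by (auto simp: mj_cons monom_mult1)
    ultimately show ?thesis unfolding S_def by (simp add: sum_distrib_left)
  qed
  finally show ?thesis .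
qed

lemma P_a0: "S 0 b d i 0 = 0"
proof -
  have "{w \<in> Wd 0 b d. w \<noteq> [] \<and> hd w = 0 \<and> dc w = i} = {}"
    by (auto simp: Wd_def count_list_0_iff) (metis list.set_sel(1))
  then show ?thesis unfolding S_def by (metis sum.empty)
qed

lemma Q_b0: "S a 0 d i 1 = 0"
proof -
  have "{w \<in> Wd a 0 d. w \<noteq> [] \<and> hd w = 1 \<and> dc w = i} = {}"
    by (auto simp: Wd_def count_list_0_iff) (metis list.set_sel(1))
  then show ?thesis unfolding S_def by (metis sum.empty)
qed

lemma Q_d0: "S a b 0 i 1 = 0"
proof -
  have "{w \<in> Wd a b 0. w \<noteq> [] \<and> hd w = 1 \<and> dc w = i} = {}"
  proof (intro equalityI subsetI)
    fix w assume "w \<in> {w \<in> Wd a b 0. w \<noteq> [] \<and> hd w = 1 \<and> dc w = i}"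
    then show "w \<in> {}" by (cases w) (auto simp: Wd_def)
  qed auto
  then show ?thesis unfolding S_def by (metis sum.empty)
qed



lemma G_negM: "M < 0 \<Longrightarrow> G M N = 0" by (simp add: G_def)
lemma G_negN: "N < 0 \<Longrightarrow> G M N = 0" by (simp add: G_def)
lemma G_lt: "M < N \<Longrightarrow> G M N = 0"
  by (auto simp: G_def Gn_zero nat_less_eq_zless)
lemma G_M0: "0 \<le> M \<Longrightarrow> G M 0 = 1" by (simp add: G_def)

lemma G_pascal':
  "N \<ge> 1 \<Longrightarrow> M' = M - 1 \<Longrightarrow> N' = N - 1 \<Longrightarrow> n = nat N \<Longrightarrow> G M N = G M' N' + monom 1 n * G M' N"
  using G_pascal[of M N] by simp

lemma ring_P:
  fixes X Y Z g1 g2 g3 g4 g5 g6 :: "'a::comm_ring"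
  assumes "X * Z = Y"
  shows "X * (Y * (g1*g2 - g3*g4)) + X * (Z * (g5*g2 - g3*g6)) = Y * ((g5 + X*g1)*g2 - g3*(g6 + X*g4))"
proof -
  have "X * (Z * (g5*g2 - g3*g6)) = (X * Z) * (g5*g2 - g3*g6)" by (simp add: mult.assoc)
  then show ?thesis using assms by (simp add: algebra_simps)
qed

lemma ring_Q:
  fixes X Y h1 h2 h3 h4 h5 h6 :: "'a::comm_ring"
  shows "X * (Y * (h1*h2 - h3*h4)) + X * ((Y * X) * (h1*h5 - h6*h4)) = (Y * X) * (h1*(h2 + X*h5) - (h3 + X*h6)*h4)"
  by (simp add: algebra_simps)

lemma P_alg:
  assumes "i \<ge> 1"
  shows "monom 1 i * Pc a b (Suc d) i + monom 1 i * Qc a b (Suc d) (i - 1) = Pc (Suc a) b d i"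
proof -
  obtain i' where i: "i = Suc i'" using assms by (cases i) auto
  define g1 where "g1 = G (int a) (int i)"
  define g2 where "g2 = G (int b - 1) (int i')"
  define g3 where "g3 = G (int a + int d + 1) (int i')"
  define g4 where "g4 = G (int b - int d - 2) (int i)"
  define g5 where "g5 = G (int a) (int i')"
  define g6 where "g6 = G (int b - int d - 2) (int i')"
  have e1: "int i - 1 = int i'" "int a + int (Suc d) = int a + int d + 1"
    "int b - int (Suc d) - 1 = int b - int d - 2" "int (Suc a) + int d = int a + int d + 1"
    "int (i - 1) = int i'" using i by auto
  have "Pc a b (Suc d) i = monom 1 (i^2) * (g1*g2 - g3*g4)"
    unfolding Pc_def g1_def g2_def g3_def g4_def e1 ..
  moreover have "Qc a b (Suc d) (i - 1) = monom 1 (i'^2 + i') * (g5*g2 - g3*g6)"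
    unfolding Qc_def g5_def g2_def g3_def g6_def e1 using i by simp
  moreover have "G (int (Suc a)) (int i) = g5 + monom 1 i * g1"
    unfolding g5_def g1_def by (rule G_pascal') (use i in auto)
  moreover have "G (int b - int d - 1) (int i) = g6 + monom 1 i * g4"
    unfolding g6_def g4_def by (rule G_pascal') (use i in auto)
  ultimately have L: "monom 1 i * Pc a b (Suc d) i + monom 1 i * Qc a b (Suc d) (i - 1)
     = monom 1 i * (monom 1 (i^2) * (g1*g2 - g3*g4)) + monom 1 i * (monom 1 (i'^2 + i') * (g5*g2 - g3*g6))"
    and R: "Pc (Suc a) b d i = monom 1 (i^2) * ((g5 + monom 1 i*g1)*g2 - g3*(g6 + monom 1 i*g4))"
    unfolding Pc_def e1 g2_def g3_def by simp_all
  have XZ: "monom (1::int) i * monom 1 (i'^2 + i') = monom 1 (i^2)"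
    unfolding monom_mult1 i by (simp add: power2_eq_square algebra_simps)
  show ?thesis unfolding L R by (rule ring_P[OF XZ])
qed

lemma Q_alg:
  assumes "i \<ge> 1"
  shows "monom 1 i * Pc a b d i + monom 1 i * Qc a b d i = Qc a (Suc b) (Suc d) i"
proof -
  define X where "X = monom (1::int) i"
  define Y where "Y = monom (1::int) (i^2)"
  define h1 where "h1 = G (int a) (int i)"
  define h2 where "h2 = G (int b - 1) (int i - 1)"
  define h3 where "h3 = G (int a + int d) (int i - 1)"
  define h4 where "h4 = G (int b - int d - 1) (int i)"
  define h5 where "h5 = G (int b - 1) (int i)"
  define h6 where "h6 = G (int a + int d) (int i)"
  have YX: "monom (1::int) (i^2 + i) = Y * X" unfolding X_def Y_def monom_mult1 ..
  have P: "Pc a b d i = Y * (h1*h2 - h3*h4)" unfolding Pc_def Y_def h1_def h2_def h3_def h4_def ..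
  have Q: "Qc a b d i = (Y * X) * (h1*h5 - h6*h4)" unfolding Qc_def YX h1_def h5_def h6_def h4_def ..
  have p1: "G (int (Suc b) - 1) (int i) = h2 + X * h5"
    unfolding h2_def h5_def X_def by (rule G_pascal') (use assms in auto)
  have p2: "G (int a + int (Suc d)) (int i) = h3 + X * h6"
    unfolding h3_def h6_def X_def by (rule G_pascal') (use assms in auto)
  have e: "int (Suc b) - int (Suc d) - 1 = int b - int d - 1" by simp
  have R: "Qc a (Suc b) (Suc d) i = (Y * X) * (h1*(h2 + X*h5) - (h3 + X*h6)*h4)"
    unfolding Qc_def YX p1 p2 e h1_def h4_def ..
  show ?thesis unfolding P Q R X_def[symmetric] by (rule ring_Q)
qed

lemma Qc_0: "Qc a b d 0 = (if b \<ge> 1 then 1 else 0) - (if b \<ge> d + 1 then 1 else 0)"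
  by (auto simp: Qc_def G_M0 G_negM)

lemma Pc_a0: "i \<ge> 1 \<Longrightarrow> b \<le> d \<Longrightarrow> Pc 0 b d i = 0"
  by (simp add: Pc_def G_lt G_negM)

lemma Qc_b0: "Qc a 0 d i = 0"
  by (simp add: Qc_def G_negM)

lemma Qc_d0: "Qc a b 0 i = 0"
  by (simp add: Qc_def)

lemma closed_form:
  "b \<le> a + d \<Longrightarrow> (i \<ge> 1 \<longrightarrow> S a b d i 0 = Pc a b d i)
     \<and> S a b d 0 0 = (if b = 0 \<and> a \<ge> 1 then 1 else 0) \<and> S a b d i 1 = Qc a b d i"
proof (induction "a + b" arbitrary: a b d i rule: less_induct)
  case less
  have PP: "(i \<ge> 1 \<longrightarrow> S a b d i 0 = Pc a b d i) \<and> S a b d 0 0 = (if b = 0 \<and> a \<ge> 1 then 1 else 0)"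
  proof (cases a)
    case 0
    then show ?thesis using less.prems by (simp add: P_a0 Pc_a0)
  next
    case (Suc a')
    have bd: "b \<le> a' + Suc d" using less.prems Suc by simp
    have lt: "a' + b < a + b" using Suc by simp
    have IH1: "\<And>i. i \<ge> 1 \<Longrightarrow> S a' b (Suc d) i 0 = Pc a' b (Suc d) i"
      using less.hyps[OF lt bd] by blast
    have IH0: "S a' b (Suc d) 0 0 = (if b = 0 \<and> a' \<ge> 1 then 1 else 0)"
      using less.hyps[OF lt bd] by blast
    have IHQ: "\<And>i. S a' b (Suc d) i 1 = Qc a' b (Suc d) i"
      using less.hyps[OF lt bd] by blast
    have A: "i \<ge> 1 \<longrightarrow> S a b d i 0 = Pc a b d i"
    proof
      assume i: "i \<ge> 1"
      have "S a b d i 0 = monom 1 i * S a' b (Suc d) i 0 + monom 1 i * S a' b (Suc d) (i - 1) 1"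
        using P_rec[of a' b d i] Suc i by simp
      also have "\<dots> = Pc a b d i" unfolding IH1[OF i] IHQ Suc by (rule P_alg[OF i])
      finally show "S a b d i 0 = Pc a b d i" .
    qed
    have B: "S a b d 0 0 = (if b = 0 \<and> a \<ge> 1 then 1 else 0)"
      using P_rec[of a' b d 0] Suc IH0 by simp
    show ?thesis using A B by blast
  qed
  have QQ: "S a b d i 1 = Qc a b d i"
  proof (cases "b = 0 \<or> d = 0")
    case True
    then show ?thesis using Q_b0 Q_d0 Qc_b0 Qc_d0 by auto
  next
    case False
    then obtain b' d' where bd': "b = Suc b'" "d = Suc d'" by (metis not0_implies_Suc)
    have bd: "b' \<le> a + d'" using less.prems bd' by simp
    have lt: "a + b' < a + b" using bd' by simp
    note IH = less.hyps[OF lt bd]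
    show ?thesis
    proof (cases "i = 0")
      case True
      have "S a b d i 1 = (if a = 0 \<and> b' = 0 then 1 else 0) + S a b' d' 0 0 + S a b' d' 0 1"
        using Q_rec[of a b' d' 0] True bd' by simp
      also have "\<dots> = Qc a b d i" using IH[of 0] True bd' by (auto simp: Qc_0)
      finally show ?thesis .
    next
      case False
      then have i: "i \<ge> 1" by simp
      have "S a b d i 1 = monom 1 i * S a b' d' i 0 + monom 1 i * S a b' d' i 1"
        using Q_rec[of a b' d' i] False bd' by simp
      also have "\<dots> = Qc a b d i" using IH[of i] i Q_alg[OF i, of a b' d'] bd' by simp
      finally show ?thesis .
    qed
  qed
  show ?case using PP QQ by blast
qed



fun occ :: "nat \<Rightarrow> nat \<Rightarrow> nat list \<Rightarrow> nat" where
  "occ r t [] = 0"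
| "occ r t (x # xs) = (if x = r then (if t \<le> 1 then 1 else Suc (occ r (t - 1) xs)) else Suc (occ r t xs))"

lemma occ_bounds: "1 \<le> t \<Longrightarrow> t \<le> count_list w r \<Longrightarrow> 1 \<le> occ r t w \<and> occ r t w \<le> length w"
proof (induction w arbitrary: t)
  case Nil then show ?case by simp
next
  case (Cons x xs)
  show ?case
  proof (cases "x = r")
    case True
    show ?thesis
    proof (cases "t \<le> 1")
      case True then show ?thesis using \<open>x = r\<close> by simp
    next
      case False
      then have "1 \<le> t - 1" "t - 1 \<le> count_list xs r" using Cons.prems \<open>x = r\<close> by auto
      then show ?thesis using Cons.IH[of "t - 1"] \<open>x = r\<close> False by simp
    qed
  next
    case False
    then show ?thesis using Cons by simp
  qed
qed

lemma occ_nth: "1 \<le> t \<Longrightarrow> t \<le> count_list w r \<Longrightarrow> w ! (occ r t w - 1) = r"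
proof (induction w arbitrary: t)
  case Nil then show ?case by simp
next
  case (Cons x xs)
  show ?case
  proof (cases "x = r")
    case True
    show ?thesis
    proof (cases "t \<le> 1")
      case True then show ?thesis using \<open>x = r\<close> by simp
    next
      case False
      then have "1 \<le> t - 1" "t - 1 \<le> count_list xs r" using Cons.prems \<open>x = r\<close> by auto
      then show ?thesis using Cons.IH[of "t - 1"] occ_bounds[of "t - 1" xs r] \<open>x = r\<close> False
        by (simp add: nth_Cons')
    qed
  next
    case False
    then have "1 \<le> t" "t \<le> count_list xs r" using Cons.prems by auto
    then show ?thesis using Cons.IH[of t] occ_bounds[of t xs r] False
      by (simp add: nth_Cons')
  qed
qed

lemma occ_count: "1 \<le> t \<Longrightarrow> t \<le> count_list w r \<Longrightarrow> count_list (take (occ r t w) w) r = t"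
proof (induction w arbitrary: t)
  case Nil then show ?case by simp
next
  case (Cons x xs)
  show ?case
  proof (cases "x = r")
    case True
    show ?thesis
    proof (cases "t \<le> 1")
      case True then have "t = 1" using Cons.prems by simp
      then show ?thesis using \<open>x = r\<close> by simp
    next
      case False
      then have "1 \<le> t - 1" "t - 1 \<le> count_list xs r" using Cons.prems \<open>x = r\<close> by auto
      then show ?thesis using Cons.IH[of "t - 1"] \<open>x = r\<close> False by simp
    qed
  next
    case False
    then have "1 \<le> t" "t \<le> count_list xs r" using Cons.prems by auto
    then show ?thesis using Cons.IH[of t] False by simp
  qed
qed

lemma occ_mono: "1 \<le> t \<Longrightarrow> t < t' \<Longrightarrow> t' \<le> count_list w r \<Longrightarrow> occ r t w < occ r t' w"
proof (induction w arbitrary: t t')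
  case Nil then show ?case by simp
next
  case (Cons x xs)
  show ?case
  proof (cases "x = r")
    case True
    have t': "1 \<le> t' - 1" "t' - 1 \<le> count_list xs r" using Cons.prems True by auto
    show ?thesis
    proof (cases "t \<le> 1")
      case True then show ?thesis using \<open>x = r\<close> Cons.prems occ_bounds[OF t'] by simp
    next
      case False
      then have "1 \<le> t - 1" "t - 1 < t' - 1" using Cons.prems by auto
      then show ?thesis using Cons.IH[of "t - 1" "t' - 1"] t' \<open>x = r\<close> False Cons.prems by simp
    qed
  next
    case False
    then show ?thesis using Cons by simp
  qed
qed

lemma occ_pos: "1 \<le> p \<Longrightarrow> p \<le> length w \<Longrightarrow> w ! (p - 1) = r \<Longrightarrow> occ r (count_list (take p w) r) w = p"
proof (induction w arbitrary: p)
  case Nil then show ?case by simp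
next
  case (Cons x xs)
  show ?case
  proof (cases "p = 1")
    case True then show ?thesis using Cons.prems by simp
  next
    case False
    then obtain p' where p: "p = Suc p'" "1 \<le> p'" using Cons.prems by (cases p) auto
    then have h: "p' \<le> length xs" "xs ! (p' - 1) = r" using Cons.prems by (auto simp: nth_Cons')
    have c1: "count_list (take p' xs) r \<ge> 1"
    proof -
      have "take p' xs = take (p' - 1) xs @ [xs ! (p' - 1)]"
        using h p by (metis Suc_diff_1 Suc_le_lessD less_le_trans take_Suc_conv_app_nth zero_less_one)
      then show ?thesis using h by simp
    qed
    show ?thesis
      using Cons.IH[OF p(2) h] p c1 by auto
  qed
qed

lemma occ_le: "1 \<le> t \<Longrightarrow> t \<le> count_list (take p w) r \<Longrightarrow> occ r t w \<le> p"
proof (induction w arbitrary: t p)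
  case Nil then show ?case by simp
next
  case (Cons x xs)
  obtain p' where p: "p = Suc p'" using Cons.prems by (cases p) auto
  show ?case
  proof (cases "x = r")
    case True
    show ?thesis
    proof (cases "t \<le> 1")
      case True then show ?thesis using \<open>x = r\<close> p by simp
    next
      case False
      then show ?thesis using Cons.IH[of "t - 1" p'] \<open>x = r\<close> Cons.prems p by simp
    qed
  next
    case False
    then show ?thesis using Cons.IH[of t p'] Cons.prems p by simp
  qed
qed

definition Dl :: "nat list \<Rightarrow> nat set" where
  "Dl w = {m. 1 \<le> m \<and> m < length w \<and> w ! (m - 1) < w ! m}"

lemma Dl_cons2: "Dl (x # y # r) = (if x < y then {1} else {}) \<union> Suc ` Dl (y # r)"
proof (intro equalityI subsetI)
  fix m assume m: "m \<in> Dl (x # y # r)"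
  show "m \<in> (if x < y then {1} else {}) \<union> Suc ` Dl (y # r)"
  proof (cases "m = 1")
    case True then show ?thesis using m by (simp add: Dl_def)
  next
    case False
    then obtain m' where "m = Suc m'" "1 \<le> m'" using m by (cases m) (auto simp: Dl_def)
    then show ?thesis using m by (auto simp: Dl_def nth_Cons')
  qed
next
  fix m assume "m \<in> (if x < y then {1} else {}) \<union> Suc ` Dl (y # r)"
  then show "m \<in> Dl (x # y # r)"
    by (cases "m = 1") (auto simp: Dl_def nth_Cons' split: if_splits)
qed

lemma Dl_short: "length w \<le> 1 \<Longrightarrow> Dl w = {}"
  by (auto simp: Dl_def)

lemma Dl_dc_mj: "set w \<subseteq> {0,1} \<Longrightarrow> card (Dl w) = dc w \<and> \<Sum>(Dl w) = mj w"
proof (induction w rule: dc.induct)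
  case (1 x y r)
  have fin: "finite (Dl (y # r))" by (auto simp: Dl_def)
  have n1: "1 \<notin> Suc ` Dl (y # r)" by (auto simp: Dl_def)
  have IH: "card (Dl (y # r)) = dc (y # r)" "\<Sum>(Dl (y # r)) = mj (y # r)" using 1 by auto
  have xy: "(x < y) = (x = 0 \<and> y = 1)" using "1.prems" by auto
  have cS: "card (Suc ` Dl (y # r)) = card (Dl (y # r))" by (simp add: card_image)
  have "\<Sum>(Suc ` Dl (y # r)) = sum Suc (Dl (y # r))" by (simp add: sum.reindex)
  also have "\<dots> = sum (\<lambda>x. x + 1) (Dl (y # r))" by simp
  also have "\<dots> = sum (\<lambda>x. x) (Dl (y # r)) + sum (\<lambda>x. 1) (Dl (y # r))" by (rule sum.distrib)
  finally have sS: "\<Sum>(Suc ` Dl (y # r)) = \<Sum>(Dl (y # r)) + card (Dl (y # r))" by simp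
  show ?case
    unfolding Dl_cons2 using fin n1 IH xy cS sS by (auto simp: card_insert_if)
qed (auto simp: Dl_def)

lemma bal_prefix: "bal d w = (\<forall>p \<le> length w. count_list (take p w) 1 \<le> count_list (take p w) 0 + d)"
proof (induction w arbitrary: d)
  case Nil then show ?case by simp
next
  case (Cons x u)
  have split: "(\<forall>p \<le> length (x # u). P p) = (P 0 \<and> (\<forall>p \<le> length u. P (Suc p)))" for P
    apply (rule iffI)
     apply simp
    apply clarify
    apply (case_tac p)
     apply auto
    done
  show ?case unfolding split using Cons.IH by auto
qed



lemma cells_iff: "(r, c) \<in> skew_cells n k j \<longleftrightarrow> (r = 0 \<and> j < c \<and> c \<le> n) \<or> (r = 1 \<and> 1 \<le> c \<and> c \<le> k)"
  by (auto simp: skew_cells_def)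

definition off :: "nat \<Rightarrow> nat \<Rightarrow> nat" where "off j r = (if r = 0 then j else 0)"

definition Tw :: "nat \<Rightarrow> nat \<Rightarrow> nat \<Rightarrow> nat list \<Rightarrow> (nat \<times> nat) \<Rightarrow> nat" where
  "Tw n k j w x = (if x \<in> skew_cells n k j then occ (fst x) (snd x - off j (fst x)) w else 0)"

definition word :: "nat \<Rightarrow> nat \<Rightarrow> nat \<Rightarrow> ((nat \<times> nat) \<Rightarrow> nat) \<Rightarrow> nat list" where
  "word n k j T = map (entry_row n k j T) [1..<Suc (n + k - j)]"

lemma syt_bij: "T \<in> skew_syt n k j \<Longrightarrow> bij_betw T (skew_cells n k j) {1..n + k - j}"
  by (simp add: skew_syt_def)

lemma er_eq:
  assumes "T \<in> skew_syt n k j" "x \<in> skew_cells n k j"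
  shows "entry_row n k j T (T x) = fst x"
proof -
  have inj: "inj_on T (skew_cells n k j)" using syt_bij[OF assms(1)] by (simp add: bij_betw_def)
  have "(THE y. y \<in> skew_cells n k j \<and> T y = T x) = x"
    by (rule the_equality) (use assms(2) inj in \<open>auto dest: inj_onD\<close>)
  then show ?thesis by (simp add: entry_row_def)
qed

lemma syt_cell_of:
  assumes "T \<in> skew_syt n k j" "1 \<le> m" "m \<le> n + k - j"
  obtains x where "x \<in> skew_cells n k j" "T x = m"
proof -
  have "m \<in> T ` skew_cells n k j" using syt_bij[OF assms(1)] assms(2,3) by (auto simp: bij_betw_def)
  then show ?thesis using that by blast
qed

lemma word_length [simp]: "length (word n k j T) = n + k - j"
  by (simp add: word_def del: upt_Suc)

lemma word_nth: "m < n + k - j \<Longrightarrow> word n k j T ! m = entry_row n k j T (Suc m)"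
  by (simp add: word_def del: upt_Suc)

context
  fixes n k j :: nat
  assumes kn: "k \<le> n" and jn: "j \<le> n"
begin

abbreviation "cells \<equiv> skew_cells n k j"
abbreviation "NN \<equiv> n + k - j"

lemma syt_range: "T \<in> skew_syt n k j \<Longrightarrow> x \<in> cells \<Longrightarrow> 1 \<le> T x \<and> T x \<le> NN"
  using syt_bij by (fastforce simp: bij_betw_def)

lemma cell_fst: "x \<in> cells \<Longrightarrow> fst x = 0 \<or> fst x = 1"
  by (cases x) (auto simp: cells_iff)

lemma word_set: "T \<in> skew_syt n k j \<Longrightarrow> set (word n k j T) \<subseteq> {0,1}"
proof
  fix v assume T: "T \<in> skew_syt n k j" and "v \<in> set (word n k j T)"
  then obtain m where m: "m < NN" "v = word n k j T ! m" by (auto simp: in_set_conv_nth)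
  obtain x where x: "x \<in> cells" "T x = Suc m" using syt_cell_of[OF T, of "Suc m"] m by auto
  have "v = fst x" using m word_nth er_eq[OF T x(1)] x by simp
  then show "v \<in> {0,1}" using cell_fst[OF x(1)] by auto
qed

lemma word_count:
  assumes T: "T \<in> skew_syt n k j"
  shows "p \<le> NN \<Longrightarrow> count_list (take p (word n k j T)) r = card {x \<in> cells. fst x = r \<and> T x \<le> p}"
proof (induction p)
  case 0
  have e: "{x \<in> cells. fst x = r \<and> T x \<le> 0} = {}" using syt_range[OF T] by fastforce
  show ?case unfolding e by simp
next
  case (Suc p)
  let ?w = "word n k j T"
  obtain x0 where x0: "x0 \<in> cells" "T x0 = Suc p" using syt_cell_of[OF T, of "Suc p"] Suc.prems by auto
  have inj: "inj_on T cells" using syt_bij[OF T] by (simp add: bij_betw_def)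
  have wp: "?w ! p = fst x0" using word_nth[of p] Suc.prems er_eq[OF T x0(1)] x0 by simp
  have tk: "take (Suc p) ?w = take p ?w @ [?w ! p]"
    using Suc.prems by (simp add: take_Suc_conv_app_nth)
  have setEq: "{x \<in> cells. fst x = r \<and> T x \<le> Suc p} = {x \<in> cells. fst x = r \<and> T x \<le> p}
      \<union> (if fst x0 = r then {x0} else {})"
  proof (intro equalityI subsetI)
    fix x assume x: "x \<in> {x \<in> cells. fst x = r \<and> T x \<le> Suc p}"
    show "x \<in> {x \<in> cells. fst x = r \<and> T x \<le> p} \<union> (if fst x0 = r then {x0} else {})"
    proof (cases "T x = Suc p")
      case True then have "x = x0" using inj x x0 by (metis (no_types, lifting) inj_onD mem_Collect_eq)
      then show ?thesis using x by auto
    next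
      case False then show ?thesis using x by auto
    qed
  next
    fix x assume "x \<in> {x \<in> cells. fst x = r \<and> T x \<le> p} \<union> (if fst x0 = r then {x0} else {})"
    then show "x \<in> {x \<in> cells. fst x = r \<and> T x \<le> Suc p}" using x0 by (auto split: if_splits)
  qed
  have fin: "finite {x \<in> cells. fst x = r \<and> T x \<le> p}"
  proof -
    have "finite cells" using syt_bij[OF T] bij_betw_finite by blast
    then show ?thesis by simp
  qed
  have "x0 \<notin> {x \<in> cells. fst x = r \<and> T x \<le> p}" using x0 by simp
  then show ?case using Suc tk wp fin unfolding setEq by (auto simp: card_insert_if)
qed

lemma syt_row: "T \<in> skew_syt n k j \<Longrightarrow> (r, c) \<in> cells \<Longrightarrow> (r, c') \<in> cells \<Longrightarrow> c < c' \<Longrightarrow> T (r, c) < T (r, c')"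
  by (simp add: skew_syt_def)

lemma syt_col: "T \<in> skew_syt n k j \<Longrightarrow> (0, c) \<in> cells \<Longrightarrow> (1, c) \<in> cells \<Longrightarrow> T (0, c) < T (1, c)"
  by (simp add: skew_syt_def)

lemma syt_out: "T \<in> skew_syt n k j \<Longrightarrow> x \<notin> cells \<Longrightarrow> T x = 0"
  by (cases x) (simp add: skew_syt_def)

lemma finite_cells: "finite cells"
proof -
  have "cells \<subseteq> {0..1} \<times> {0..n}" using kn by (auto simp: skew_cells_def)
  then show ?thesis by (rule finite_subset) simp
qed

lemma row_card:
  assumes T: "T \<in> skew_syt n k j" and rc: "(r, c) \<in> cells"
  shows "card {y \<in> cells. fst y = r \<and> T y \<le> T (r, c)} = c - off j r"
proof -
  have "{y \<in> cells. fst y = r \<and> T y \<le> T (r, c)} = (\<lambda>c'. (r, c')) ` {off j r <.. c}"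
  proof (intro equalityI subsetI)
    fix y assume y: "y \<in> {y \<in> cells. fst y = r \<and> T y \<le> T (r, c)}"
    obtain c' where yc: "y = (r, c')" using y by (cases y) auto
    have "\<not> c < c'" using syt_row[OF T rc, of c'] y yc by auto
    moreover have "off j r < c'" using y yc by (auto simp: cells_iff off_def)
    ultimately show "y \<in> (\<lambda>c'. (r, c')) ` {off j r <.. c}" using yc by auto
  next
    fix y assume "y \<in> (\<lambda>c'. (r, c')) ` {off j r <.. c}"
    then obtain c' where c': "y = (r, c')" "off j r < c'" "c' \<le> c" by auto
    have yc: "(r, c') \<in> cells" using rc c' by (auto simp: cells_iff off_def)
    have "T (r, c') \<le> T (r, c)"
      using syt_row[OF T yc rc] c' by (cases "c' = c") auto
    then show "y \<in> {y \<in> cells. fst y = r \<and> T y \<le> T (r, c)}" using c' yc by auto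
  qed
  moreover have "card ((\<lambda>c'. (r, c')) ` {off j r <.. c}) = c - off j r"
    by (subst card_image) (auto simp: inj_on_def)
  ultimately show ?thesis by simp
qed

lemma word_count_all:
  assumes T: "T \<in> skew_syt n k j"
  shows "count_list (word n k j T) r = card {x \<in> cells. fst x = r}"
proof -
  have "count_list (word n k j T) r = count_list (take NN (word n k j T)) r" by simp
  also have "\<dots> = card {x \<in> cells. fst x = r \<and> T x \<le> NN}" by (rule word_count[OF T]) simp
  also have "{x \<in> cells. fst x = r \<and> T x \<le> NN} = {x \<in> cells. fst x = r}"
    using syt_range[OF T] by auto
  finally show ?thesis .
qed

lemma card_row0: "card {x \<in> cells. fst x = 0} = n - j"
proof -
  have "{x \<in> cells. fst x = 0} = (\<lambda>c. (0, c)) ` {j<..n}" by (auto simp: skew_cells_def)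
  moreover have "card ((\<lambda>c. (0::nat, c)) ` {j<..n}) = n - j" by (subst card_image) (auto simp: inj_on_def)
  ultimately show ?thesis by simp
qed

lemma card_row1: "card {x \<in> cells. fst x = 1} = k"
proof -
  have "{x \<in> cells. fst x = 1} = (\<lambda>c. (1, c)) ` {1..k}" by (auto simp: skew_cells_def)
  moreover have "card ((\<lambda>c. (1::nat, c)) ` {1..k}) = k" by (subst card_image) (auto simp: inj_on_def)
  ultimately show ?thesis by simp
qed

lemma word_ballot:
  assumes T: "T \<in> skew_syt n k j" and p: "p \<le> NN"
  shows "count_list (take p (word n k j T)) 1 \<le> count_list (take p (word n k j T)) 0 + j"
proof -
  define B1 where "B1 = {x \<in> cells. fst x = 1 \<and> T x \<le> p}"
  define B0 where "B0 = {x \<in> cells. fst x = 0 \<and> T x \<le> p}"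
  have fB0: "finite B0" unfolding B0_def using finite_cells by simp
  have "B1 \<subseteq> {x \<in> B1. snd x \<le> j} \<union> {x \<in> B1. j < snd x}" by auto
  then have "card B1 \<le> card ({x \<in> B1. snd x \<le> j} \<union> {x \<in> B1. j < snd x})"
    by (rule card_mono[rotated]) (auto simp: B1_def intro: finite_subset[OF _ finite_cells])
  also have "\<dots> \<le> card {x \<in> B1. snd x \<le> j} + card {x \<in> B1. j < snd x}" by (rule card_Un_le)
  also have "card {x \<in> B1. snd x \<le> j} \<le> j"
  proof -
    have "{x \<in> B1. snd x \<le> j} \<subseteq> (\<lambda>c. (1, c)) ` {1..j}" by (auto simp: B1_def skew_cells_def)
    then have "card {x \<in> B1. snd x \<le> j} \<le> card ((\<lambda>c. (1::nat, c)) ` {1..j})"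
      by (rule card_mono[rotated]) simp
    also have "\<dots> \<le> j" using card_image_le[of "{1..j}" "\<lambda>c. (1::nat, c)"] by simp
    finally show ?thesis .
  qed
  also have "card {x \<in> B1. j < snd x} \<le> card B0"
  proof (rule card_inj_on_le[of "\<lambda>x. (0, snd x)"])
    show "inj_on (\<lambda>x. (0::nat, snd x)) {x \<in> B1. j < snd x}"
      by (auto simp: inj_on_def B1_def prod_eq_iff)
    show "(\<lambda>x. (0::nat, snd x)) ` {x \<in> B1. j < snd x} \<subseteq> B0"
    proof
      fix y assume "y \<in> (\<lambda>x. (0::nat, snd x)) ` {x \<in> B1. j < snd x}"
      then obtain c where c: "y = (0, c)" "(1, c) \<in> cells" "T (1, c) \<le> p" "j < c"
        by (auto simp: B1_def)
      have c0: "(0, c) \<in> cells" using c kn by (auto simp: cells_iff)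
      have "T (0, c) < T (1, c)" by (rule syt_col[OF T c0 c(2)])
      then show "y \<in> B0" using c c0 by (auto simp: B0_def)
    qed
  qed (rule fB0)
  finally have "card B1 \<le> j + card B0" by simp
  then show ?thesis unfolding word_count[OF T p] B1_def B0_def by simp
qed

lemma word_in_Wd: "T \<in> skew_syt n k j \<Longrightarrow> word n k j T \<in> Wd (n - j) k j"
  unfolding Wd_def bal_prefix
  using word_set word_count_all card_row0 card_row1 word_ballot by auto

lemma Tw_word: 
  assumes T: "T \<in> skew_syt n k j"
  shows "Tw n k j (word n k j T) = T"
proof
  fix x
  let ?w = "word n k j T"
  show "Tw n k j ?w x = T x"
  proof (cases "x \<in> cells")
    case False then show ?thesis using syt_out[OF T] by (simp add: Tw_def)
  next
    case True
    obtain r c where x: "x = (r, c)" by (cases x)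
    have rng: "1 \<le> T x" "T x \<le> NN" using syt_range[OF T True] by auto
    have nth: "?w ! (T x - 1) = r"
      using word_nth[of "T x - 1"] rng er_eq[OF T True] x by simp
    have "occ r (count_list (take (T x) ?w) r) ?w = T x"
      by (rule occ_pos) (use rng nth in auto)
    moreover have "count_list (take (T x) ?w) r = c - off j r"
      using word_count[OF T rng(2), of r] row_card[OF T, of r c] True x by simp
    ultimately show ?thesis using True x by (simp add: Tw_def)
  qed
qed

lemma Wd_len: "w \<in> Wd (n - j) k j \<Longrightarrow> length w = NN"
  using len_count[of w] jn by (auto simp: Wd_def)

lemma t_range:
  assumes w: "w \<in> Wd (n - j) k j" and x: "(r, c) \<in> cells"
  shows "1 \<le> c - off j r" "c - off j r \<le> count_list w r"
  using w x by (auto simp: Wd_def cells_iff off_def)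

lemma Tw_cell:
  assumes w: "w \<in> Wd (n - j) k j" and x: "(r, c) \<in> cells"
  shows "Tw n k j w (r, c) = occ r (c - off j r) w"
  using x by (simp add: Tw_def)

lemma Tw_surj:
  assumes w: "w \<in> Wd (n - j) k j" and p: "1 \<le> p" "p \<le> NN"
  shows "(w ! (p - 1), count_list (take p w) (w ! (p - 1)) + off j (w ! (p - 1))) \<in> cells
    \<and> Tw n k j w (w ! (p - 1), count_list (take p w) (w ! (p - 1)) + off j (w ! (p - 1))) = p"
proof -
  let ?r = "w ! (p - 1)"
  let ?t = "count_list (take p w) ?r"
  have len: "length w = NN" by (rule Wd_len[OF w])
  have "p - 1 < length w" using p len by simp
  then have "?r \<in> set w" by simp
  then have r01: "?r = 0 \<or> ?r = 1" using w by (auto simp: Wd_def)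
  have tk: "take p w = take (p - 1) w @ [?r]"
    using p len by (metis Suc_diff_1 Suc_le_lessD le_less_trans less_le_trans take_Suc_conv_app_nth zero_less_one diff_less)
  have t1: "1 \<le> ?t" by (subst tk) simp
  have "?t \<le> count_list w ?r"
  proof -
    have "count_list w ?r = count_list (take p w) ?r + count_list (drop p w) ?r"
      by (metis append_take_drop_id count_list_append)
    then show ?thesis by simp
  qed
  then have t2: "?t \<le> (if ?r = 0 then n - j else k)" using w r01 by (auto simp: Wd_def)
  have cell: "(?r, ?t + off j ?r) \<in> cells"
    using r01 t1 t2 kn by (auto simp: cells_iff off_def)
  have "Tw n k j w (?r, ?t + off j ?r) = occ ?r ?t w"
    using cell by (simp add: Tw_def)
  also have "\<dots> = p" by (rule occ_pos) (use p len in auto)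
  finally show ?thesis using cell by simp
qed

lemma Tw_syt:
  assumes w: "w \<in> Wd (n - j) k j"
  shows "Tw n k j w \<in> skew_syt n k j"
proof -
  have len: "length w = NN" by (rule Wd_len[OF w])
  have inj: "inj_on (Tw n k j w) cells"
  proof (rule inj_onI)
    fix x y assume x: "x \<in> cells" and y: "y \<in> cells" and eq: "Tw n k j w x = Tw n k j w y"
    obtain r c where xr: "x = (r, c)" by (cases x)
    obtain r' c' where yr: "y = (r', c')" by (cases y)
    have tx: "1 \<le> c - off j r" "c - off j r \<le> count_list w r" using t_range[OF w] x xr by auto
    have ty: "1 \<le> c' - off j r'" "c' - off j r' \<le> count_list w r'" using t_range[OF w] y yr by auto
    have e: "occ r (c - off j r) w = occ r' (c' - off j r') w"
      using eq x y xr yr by (simp add: Tw_def)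
    have "r = r'" using occ_nth[OF tx] occ_nth[OF ty] e by simp
    moreover have "c - off j r = c' - off j r'"
    proof (rule ccontr)
      assume "c - off j r \<noteq> c' - off j r'"
      then consider "c - off j r < c' - off j r'" | "c' - off j r' < c - off j r" by linarith
      then show False
      proof cases
        case 1
        have "occ r (c - off j r) w < occ r (c' - off j r') w"
          by (rule occ_mono) (use 1 tx ty \<open>r = r'\<close> in auto)
        then show False using e \<open>r = r'\<close> by simp
      next
        case 2
        have "occ r (c' - off j r') w < occ r (c - off j r) w"
          by (rule occ_mono) (use 2 tx ty \<open>r = r'\<close> in auto)
        then show False using e \<open>r = r'\<close> by simp
      qed
    qed
    moreover have "off j r < c" "off j r' < c'" using x y xr yr by (auto simp: cells_iff off_def)
    ultimately show "x = y" using xr yr by auto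
  qed
  have img: "Tw n k j w ` cells = {1..NN}"
  proof (intro equalityI subsetI)
    fix v assume "v \<in> Tw n k j w ` cells"
    then obtain r c where x: "(r, c) \<in> cells" "v = Tw n k j w (r, c)" by auto
    then show "v \<in> {1..NN}"
      using occ_bounds[OF t_range[OF w x(1)]] len by (simp add: Tw_def)
  next
    fix p assume "p \<in> {1..NN}"
    then show "p \<in> Tw n k j w ` cells" using Tw_surj[OF w, of p] by (metis atLeastAtMost_iff image_eqI)
  qed
  have row: "\<forall>r c c'. (r, c) \<in> cells \<and> (r, c') \<in> cells \<and> c < c' \<longrightarrow> Tw n k j w (r, c) < Tw n k j w (r, c')"
  proof (intro allI impI)
    fix r c c' assume h: "(r, c) \<in> cells \<and> (r, c') \<in> cells \<and> c < c'"
    have "c - off j r < c' - off j r" using h by (auto simp: cells_iff off_def)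
    then show "Tw n k j w (r, c) < Tw n k j w (r, c')"
      using occ_mono[OF t_range(1)[OF w, of r c] _ t_range(2)[OF w, of r c']] h by (simp add: Tw_def)
  qed
  have col: "\<forall>c. (0, c) \<in> cells \<and> (1, c) \<in> cells \<longrightarrow> Tw n k j w (0, c) < Tw n k j w (1, c)"
  proof (intro allI impI)
    fix c assume h: "(0, c) \<in> cells \<and> (1, c) \<in> cells"
    then have c: "j < c" "c \<le> k" "1 \<le> c" by (auto simp: cells_iff)
    have t1: "1 \<le> c" "c \<le> count_list w 1" using t_range[OF w, of 1 c] h by (auto simp: off_def)
    define p where "p = occ 1 c w"
    have pb: "1 \<le> p" "p \<le> NN" using occ_bounds[OF t1] len by (auto simp: p_def)
    have cp: "count_list (take p w) 1 = c" using occ_count[OF t1] by (simp add: p_def)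
    have "count_list (take p w) 1 \<le> count_list (take p w) 0 + j"
      using w pb len by (auto simp: Wd_def bal_prefix)
    then have "c - j \<le> count_list (take p w) 0" using cp by simp
    then have le: "occ 0 (c - j) w \<le> p" using occ_le[of "c - j" p w 0] c by simp
    have t0: "1 \<le> c - j" "c - j \<le> count_list w 0" using t_range[OF w, of 0 c] h by (auto simp: off_def)
    have "occ 0 (c - j) w \<noteq> p" using occ_nth[OF t0] occ_nth[OF t1] by (auto simp: p_def)
    then show "Tw n k j w (0, c) < Tw n k j w (1, c)"
      using le h by (simp add: Tw_def off_def p_def)
  qed
  have out: "\<forall>x. x \<notin> cells \<longrightarrow> Tw n k j w x = 0" by (simp add: Tw_def)
  show ?thesis unfolding skew_syt_def using inj img row col out by (simp add: bij_betw_def)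
qed

lemma word_Tw:
  assumes w: "w \<in> Wd (n - j) k j"
  shows "word n k j (Tw n k j w) = w"
proof (rule nth_equalityI)
  show "length (word n k j (Tw n k j w)) = length w" using Wd_len[OF w] by simp
next
  fix m assume "m < length (word n k j (Tw n k j w))"
  then have m: "m < NN" by simp
  have "(w ! m, count_list (take (Suc m) w) (w ! m) + off j (w ! m)) \<in> cells
    \<and> Tw n k j w (w ! m, count_list (take (Suc m) w) (w ! m) + off j (w ! m)) = Suc m"
    using Tw_surj[OF w, of "Suc m"] m by simp
  then show "word n k j (Tw n k j w) ! m = w ! m"
    using word_nth[OF m] er_eq[OF Tw_syt[OF w]] by (metis fst_conv)
qed

lemma word_bij: "bij_betw (word n k j) (skew_syt n k j) (Wd (n - j) k j)"
  by (rule bij_betw_byWitness[where f' = "Tw n k j"])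
     (use Tw_word word_Tw word_in_Wd Tw_syt in auto)

lemma descents_word:
  assumes T: "T \<in> skew_syt n k j"
  shows "descents n k j T = Dl (word n k j T)"
proof -
  have "\<And>m. 1 \<le> m \<Longrightarrow> m < NN \<Longrightarrow> entry_row n k j T m = word n k j T ! (m - 1)
      \<and> entry_row n k j T (m + 1) = word n k j T ! m"
    using word_nth by auto
  then show ?thesis unfolding descents_def Dl_def by auto
qed

end



theorem mainTheorem4:
  fixes n k j i :: nat
  assumes "n \<ge> k" and "k \<ge> 1" and "j < n" and "i \<ge> 1"
  shows "rf (fstar n k j i) =
    rf (monom 1 (i ^ 2)) *
      (qbinom (int n - int j) (int i) * qbinom (int k - 1) (int i - 1)
       - qbinom (int n) (int i - 1) * qbinom (int k - int j - 1) (int i))"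
proof -
  have kn: "k \<le> n" and jn: "j \<le> n" using assms by auto
  define A where "A = {T \<in> skew_syt n k j. card (descents n k j T) = i \<and> entry_row n k j T 1 = 0}"
  define B where "B = {w \<in> Wd (n - j) k j. w \<noteq> [] \<and> hd w = 0 \<and> dc w = i}"
  have bij: "bij_betw (word n k j) (skew_syt n k j) (Wd (n - j) k j)" by (rule word_bij[OF kn jn])
  have props: "card (descents n k j T) = dc (word n k j T) \<and> maj n k j T = mj (word n k j T)
      \<and> (entry_row n k j T 1 = 0 \<longleftrightarrow> word n k j T \<noteq> [] \<and> hd (word n k j T) = 0)"
    if T: "T \<in> skew_syt n k j" for T
  proof -
    have d: "descents n k j T = Dl (word n k j T)" by (rule descents_word[OF kn jn T])
    have s: "set (word n k j T) \<subseteq> {0,1}" by (rule word_set[OF kn jn T])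
    have N: "0 < n + k - j" using assms by simp
    have "word n k j T \<noteq> []" using N by (metis length_0_conv word_length less_irrefl)
    moreover have "hd (word n k j T) = entry_row n k j T 1"
      using word_nth[OF N] calculation by (simp add: hd_conv_nth)
    ultimately show ?thesis using Dl_dc_mj[OF s] d by (simp add: maj_def)
  qed
  have inj: "inj_on (word n k j) A" using bij by (auto simp: A_def bij_betw_def intro: inj_on_subset)
  have img: "word n k j ` A = B"
  proof (intro equalityI subsetI)
    fix w assume "w \<in> word n k j ` A"
    then obtain T where "T \<in> A" "w = word n k j T" by auto
    then show "w \<in> B" using props[of T] bij by (auto simp: A_def B_def bij_betw_def)
  next
    fix w assume w: "w \<in> B"
    then have "w \<in> word n k j ` skew_syt n k j" using bij by (auto simp: B_def bij_betw_def)
    then obtain T where T: "T \<in> skew_syt n k j" "w = word n k j T" by auto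
    then have "T \<in> A" using props[OF T(1)] w by (auto simp: A_def B_def)
    then show "w \<in> word n k j ` A" using T by auto
  qed
  have "fstar n k j i = (\<Sum>T \<in> A. monom 1 (mj (word n k j T)))"
    unfolding fstar_def A_def by (rule sum.cong) (auto simp: props)
  also have "\<dots> = (\<Sum>w \<in> word n k j ` A. monom 1 (mj w))"
    by (rule sum.reindex[OF inj, symmetric, unfolded comp_def])
  also have "\<dots> = S (n - j) k j i 0" unfolding img B_def S_def ..
  also have "\<dots> = Pc (n - j) k j i" using closed_form[of k "n - j" j i] assms by simp
  finally have f: "fstar n k j i = Pc (n - j) k j i" .
  have e1: "int (n - j) = int n - int j" "int (n - j) + int j = int n" using jn by auto
  show ?thesis unfolding f Pc_def e1 qbinom_G rf_mult rf_diff by simp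
qed


end
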